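(* Let $M$ be a finite-dimensional left $\mathsf{VBr}_{r,t}(\omega)$-module, decomposed as $M=\bigoplus_{\mathbf a\in\mathrm{Seq}_{r,t},\,\mathbf i\in\mathbb C^{r+t}}1_{\mathbf a}M_{\mathbf i}$. Then for all $k\in\{1,\dots,r+t-1\}$, $\mathbf a\in\mathrm{Seq}_{r,t}$ and $\mathbf i\in\mathbb C^{r+t}$, $$s_k1_{\mathbf a}M_{\mathbf i}\subseteq 1_{\mathbf a}M_{\mathbf i}+1_{\mathbf a}M_{\mathsf s_k\mathbf i}.$$
   Context: $\mathrm{Seq}_{r,t}$: sequences $\mathbf a\in\{\wedge,\vee\}^{r+t}$ with exactly $r$ entries $\wedge$; $J=\{1,\dots,r+t-1\}$; $\mathsf s_k$ swaps entries $k,k+1$ of a sequence (also of $\mathbf i\in\mathbb C^{r+t}$). $\mathrm{Br}_{r,t}(\gamma)$: basis oriented Brauer diagrams $\mathbf a\to\mathbf b$ (perfect matchings between bottom row labelled $\mathbf a$ and top row labelled $\mathbf b$; bottom-to-top strands join equal labels, strands within a row join different labels), product by stacking (second factor below), $0$ if labels mismatch, loops replaced by $\gamma$. $1_{\mathbf a}$ identity; for $k\in J$: if $a_k=a_{k+1}$, $s_k1_{\mathbf a}$ crosses strands $k,k+1$ ($\mathbf a\to\mathbf a$); if $a_k\neq a_{k+1}$, $\hat s_k1_{\mathbf a}$ crossing $\mathbf a\to\mathsf s_k\mathbf a$, $e_k1_{\mathbf a}$ cap at bottom $k,k+1$ and cup at top $k,k+1$ ($\mathbf a\to\mathbf a$),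 $\hat e_k1_{\mathbf a}$ same shape $\mathbf a\to\mathsf s_k\mathbf a$; these are $0$ when the condition fails; $s_k=\sum_{\mathbf a}s_k1_{\mathbf a}$ etc. For $\omega=(\omega_j)_{j\ge0}\subset\mathbb C$, $\mathsf{VBr}_{r,t}(\omega)$ is the quotient of the free product $\mathrm{Br}_{r,t}(\omega_0)*\mathbb C[y_1,\dots,y_{r+t}]$ by: $y_i$ commutes with all $1_{\mathbf a}$, and with $s_k,\hat s_k,e_k,\hat e_k$ when $i\notin\{k,k+1\}$; $e_1y_1^je_11_{\mathbf a}=\omega_je_11_{\mathbf a}$ for $j\ge0$ and $(a_1,a_2)=(\wedge,\vee)$; for $a_k=a_{k+1}$: $s_ky_k1_{\mathbf a}-y_{k+1}s_k1_{\mathbf a}=-1_{\mathbf a}$, $s_ky_{k+1}1_{\mathbf a}-y_ks_k1_{\mathbf a}=1_{\mathbf a}$; $\hat s_ky_k-y_{k+1}\hat s_k=\hat e_k$, $\hat s_ky_{k+1}-y_k\hat s_k=-\hat e_k$; $e_k(y_k+y_{k+1})=(y_k+y_{k+1})e_k=\hat e_k(y_k+y_{k+1})=(y_k+y_{k+1})\hat e_k=0$. For a finite-dimensional module $M$: $1_{\mathbf a}M_{\mathbf i}=\{v\in1_{\mathbf a}M:(y_k-\mathrm i_k)^Nv=0\ \forall k, \text{ for } N\gg0\}$. *)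

theory Defs
  imports Complex_Main
begin

(* A sequence a in {up,down}^n is a bool list of length n; True = \<and> (up), False = \<or> (down).
   Positions are 1-based: entry k of a sequence is  a ! (k - 1).
   A point of a Brauer diagram is (row, i) with row = False (bottom) / True (top), 1 \<le> i \<le> n. *)

definition Seq :: "nat \<Rightarrow> nat \<Rightarrow> bool list set" where
  "Seq r t = {a. length a = r + t \<and> length (filter id a) = r}"

definition swapL :: "nat \<Rightarrow> 'x list \<Rightarrow> 'x list" where
  "swapL k xs = xs[k - 1 := xs ! k, k := xs ! (k - 1)]"

type_synonym pt = "bool \<times> nat"

(* oriented Brauer diagram: (bottom labels, top labels, perfect matching as an involution) *)
type_synonym diag = "bool list \<times> bool list \<times> (pt \<Rightarrow> pt)"

definition pts :: "nat \<Rightarrow> pt set" where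
  "pts n = {p. 1 \<le> snd p \<and> snd p \<le> n}"

definition lab :: "bool list \<Rightarrow> bool list \<Rightarrow> pt \<Rightarrow> bool" where
  "lab a b p = (if fst p then b ! (snd p - 1) else a ! (snd p - 1))"

definition dbot :: "diag \<Rightarrow> bool list" where "dbot d = fst d"
definition dtop :: "diag \<Rightarrow> bool list" where "dtop d = fst (snd d)"
definition dmat :: "diag \<Rightarrow> pt \<Rightarrow> pt" where "dmat d = snd (snd d)"

(* basis diagrams a \<rightarrow> b of Br_{r,t}; the matching is normalised to be the identity
   outside the 2n points, so that diagrams are equal iff they are equal as pictures *)
definition is_diag :: "nat \<Rightarrow> nat \<Rightarrow> diag \<Rightarrow> bool" where
  "is_diag r t d \<longleftrightarrow>
     dbot d \<in> Seq r t \<and> dtop d \<in> Seq r t \<and>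
     (\<forall>p. p \<notin> pts (r + t) \<longrightarrow> dmat d p = p) \<and>
     (\<forall>p \<in> pts (r + t). dmat d p \<in> pts (r + t) \<and> dmat d p \<noteq> p \<and> dmat d (dmat d p) = p \<and>
        (fst p = fst (dmat d p) \<longleftrightarrow> lab (dbot d) (dtop d) p \<noteq> lab (dbot d) (dtop d) (dmat d p)))"

(* Stacking d1 (on top) over d2 (below).  Levels: 0 = bottom of d2,
   1 = middle (top of d2 = bottom of d1), 2 = top of d1. *)
definition stack_edges :: "diag \<Rightarrow> diag \<Rightarrow> ((nat \<times> nat) \<times> (nat \<times> nat)) set" where
  "stack_edges d1 d2 =
     (let n = length (dbot d2);
          L0 = (\<lambda>p::pt. (if fst p then 1::nat else 0, snd p));
          L1 = (\<lambda>p::pt. (if fst p then 2::nat else 1, snd p))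
      in {(L0 p, L0 (dmat d2 p)) | p. p \<in> pts n} \<union> {(L1 p, L1 (dmat d1 p)) | p. p \<in> pts n})"

definition stack_conn :: "diag \<Rightarrow> diag \<Rightarrow> ((nat \<times> nat) \<times> (nat \<times> nat)) set" where
  "stack_conn d1 d2 = (stack_edges d1 d2)\<^sup>*"

definition outer :: "pt \<Rightarrow> nat \<times> nat" where
  "outer p = (if fst p then (2, snd p) else (0, snd p))"

definition dcomp :: "diag \<Rightarrow> diag \<Rightarrow> diag" where
  "dcomp d1 d2 =
     (dbot d2, dtop d1,
      \<lambda>p. if p \<in> pts (length (dbot d2))
          then (THE q. q \<in> pts (length (dbot d2)) \<and> q \<noteq> p \<and> (outer p, outer q) \<in> stack_conn d1 d2)
          else p)"

(* number of closed loops created by stacking *)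
definition nloops :: "diag \<Rightarrow> diag \<Rightarrow> nat" where
  "nloops d1 d2 =
     card {stack_conn d1 d2 `` {x} | x.
             x \<in> {(1, i) | i. 1 \<le> i \<and> i \<le> length (dbot d2)} \<and>
             \<not> (\<exists>q \<in> pts (length (dbot d2)). (x, outer q) \<in> stack_conn d1 d2)}"

definition idd :: "bool list \<Rightarrow> diag" where
  "idd a = (a, a, \<lambda>p. if p \<in> pts (length a) then (\<not> fst p, snd p) else p)"

definition sw :: "nat \<Rightarrow> nat \<Rightarrow> nat" where
  "sw k i = (if i = k then k + 1 else if i = k + 1 then k else i)"

definition cross_mat :: "nat \<Rightarrow> nat \<Rightarrow> pt \<Rightarrow> pt" where
  "cross_mat n k p = (if p \<in> pts n then (\<not> fst p, sw k (snd p)) else p)"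

definition capcup_mat :: "nat \<Rightarrow> nat \<Rightarrow> pt \<Rightarrow> pt" where
  "capcup_mat n k p = (if p \<in> pts n then
       (if snd p = k then (fst p, k + 1) else if snd p = k + 1 then (fst p, k) else (\<not> fst p, snd p))
     else p)"

definition sdiag :: "nat \<Rightarrow> bool list \<Rightarrow> diag" where
  "sdiag k a = (a, a, cross_mat (length a) k)"
definition shdiag :: "nat \<Rightarrow> bool list \<Rightarrow> diag" where
  "shdiag k a = (a, swapL k a, cross_mat (length a) k)"
definition ediag :: "nat \<Rightarrow> bool list \<Rightarrow> diag" where
  "ediag k a = (a, a, capcup_mat (length a) k)"
definition ehdiag :: "nat \<Rightarrow> bool list \<Rightarrow> diag" where
  "ehdiag k a = (a, swapL k a, capcup_mat (length a) k)"

(* action of 1_a, s_k, \<hat>s_k, e_k, \<hat>e_k (the latter as sums over a) *)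
definition Pa :: "(diag \<Rightarrow> 'm \<Rightarrow> 'm) \<Rightarrow> bool list \<Rightarrow> 'm \<Rightarrow> 'm" where
  "Pa \<rho> a = \<rho> (idd a)"

definition Sop :: "nat \<Rightarrow> nat \<Rightarrow> (diag \<Rightarrow> 'm \<Rightarrow> 'm::ab_group_add) \<Rightarrow> nat \<Rightarrow> 'm \<Rightarrow> 'm" where
  "Sop r t \<rho> k v = (\<Sum>a\<in>Seq r t. if a ! (k - 1) = a ! k then \<rho> (sdiag k a) v else 0)"
definition Shop :: "nat \<Rightarrow> nat \<Rightarrow> (diag \<Rightarrow> 'm \<Rightarrow> 'm::ab_group_add) \<Rightarrow> nat \<Rightarrow> 'm \<Rightarrow> 'm" where
  "Shop r t \<rho> k v = (\<Sum>a\<in>Seq r t. if a ! (k - 1) \<noteq> a ! k then \<rho> (shdiag k a) v else 0)"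
definition Eop :: "nat \<Rightarrow> nat \<Rightarrow> (diag \<Rightarrow> 'm \<Rightarrow> 'm::ab_group_add) \<Rightarrow> nat \<Rightarrow> 'm \<Rightarrow> 'm" where
  "Eop r t \<rho> k v = (\<Sum>a\<in>Seq r t. if a ! (k - 1) \<noteq> a ! k then \<rho> (ediag k a) v else 0)"
definition Ehop :: "nat \<Rightarrow> nat \<Rightarrow> (diag \<Rightarrow> 'm \<Rightarrow> 'm::ab_group_add) \<Rightarrow> nat \<Rightarrow> 'm \<Rightarrow> 'm" where
  "Ehop r t \<rho> k v = (\<Sum>a\<in>Seq r t. if a ! (k - 1) \<noteq> a ! k then \<rho> (ehdiag k a) v else 0)"

definition commute_ops :: "('m \<Rightarrow> 'm) \<Rightarrow> ('m \<Rightarrow> 'm) \<Rightarrow> bool" where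
  "commute_ops f g \<longleftrightarrow> (\<forall>v. f (g v) = g (f v))"

(* A finite-dimensional left VBr_{r,t}(\<omega>)-module: a finite-dimensional complex vector space
   ('m, scale) with an action \<rho> of the basis diagrams of Br_{r,t}(\<omega> 0) (i.e. an algebra map
   Br_{r,t}(\<omega> 0) \<rightarrow> End M, unital), commuting operators y 1, ..., y (r+t) (a C[y]-module),
   subject to the defining relations of VBr_{r,t}(\<omega>). *)
definition vbr_module ::
  "nat \<Rightarrow> nat \<Rightarrow> (nat \<Rightarrow> complex) \<Rightarrow> (complex \<Rightarrow> 'm::ab_group_add \<Rightarrow> 'm)
     \<Rightarrow> (diag \<Rightarrow> 'm \<Rightarrow> 'm) \<Rightarrow> (nat \<Rightarrow> 'm \<Rightarrow> 'm) \<Rightarrow> bool" where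
  "vbr_module r t \<omega> scale \<rho> y \<longleftrightarrow>
     (let n = r + t; J = {1..<r + t};
          P = Pa \<rho>; S = Sop r t \<rho>; Sh = Shop r t \<rho>; E = Eop r t \<rho>; Eh = Ehop r t \<rho> in
     vector_space scale \<and>
     (\<exists>B. finite B \<and> module.span scale B = UNIV) \<and>
     \<comment> \<open>Br-module structure\<close>
     (\<forall>d. is_diag r t d \<longrightarrow> Vector_Spaces.linear scale scale (\<rho> d)) \<and>
     (\<forall>d1 d2. is_diag r t d1 \<and> is_diag r t d2 \<longrightarrow>
        (\<forall>v. \<rho> d1 (\<rho> d2 v) =
              (if dbot d1 = dtop d2 then scale ((\<omega> 0) ^ nloops d1 d2) (\<rho> (dcomp d1 d2) v) else 0))) \<and>
     (\<forall>v. (\<Sum>a\<in>Seq r t. P a v) = v) \<and>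
     \<comment> \<open>C[y_1,...,y_n]-module structure\<close>
     (\<forall>i\<in>{1..n}. Vector_Spaces.linear scale scale (y i)) \<and>
     (\<forall>i\<in>{1..n}. \<forall>j\<in>{1..n}. commute_ops (y i) (y j)) \<and>
     \<comment> \<open>relations\<close>
     (\<forall>i\<in>{1..n}. \<forall>a\<in>Seq r t. commute_ops (y i) (P a)) \<and>
     (\<forall>i\<in>{1..n}. \<forall>k\<in>J. i \<noteq> k \<and> i \<noteq> k + 1 \<longrightarrow>
        commute_ops (y i) (S k) \<and> commute_ops (y i) (Sh k) \<and>
        commute_ops (y i) (E k) \<and> commute_ops (y i) (Eh k)) \<and>
     (\<forall>j. \<forall>a\<in>Seq r t. 2 \<le> n \<and> a ! 0 \<and> \<not> a ! 1 \<longrightarrow>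
        (\<forall>v. E 1 ((y 1 ^^ j) (E 1 (P a v))) = scale (\<omega> j) (E 1 (P a v)))) \<and>
     (\<forall>k\<in>J. \<forall>a\<in>Seq r t. a ! (k - 1) = a ! k \<longrightarrow>
        (\<forall>v. S k (y k (P a v)) - y (k + 1) (S k (P a v)) = - P a v \<and>
             S k (y (k + 1) (P a v)) - y k (S k (P a v)) = P a v)) \<and>
     (\<forall>k\<in>J. \<forall>v. Sh k (y k v) - y (k + 1) (Sh k v) = Eh k v \<and>
                 Sh k (y (k + 1) v) - y k (Sh k v) = - Eh k v) \<and>
     (\<forall>k\<in>J. \<forall>v. E k (y k v + y (k + 1) v) = 0 \<and> y k (E k v) + y (k + 1) (E k v) = 0 \<and>
                 Eh k (y k v + y (k + 1) v) = 0 \<and> y k (Eh k v) + y (k + 1) (Eh k v) = 0))"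

(* 1_a M_i  (i is a list of length r+t, entry k is i ! (k - 1)) *)
definition genspace ::
  "nat \<Rightarrow> (complex \<Rightarrow> 'm::ab_group_add \<Rightarrow> 'm) \<Rightarrow> (diag \<Rightarrow> 'm \<Rightarrow> 'm) \<Rightarrow> (nat \<Rightarrow> 'm \<Rightarrow> 'm)
     \<Rightarrow> bool list \<Rightarrow> complex list \<Rightarrow> 'm set" where
  "genspace n scale \<rho> y a i =
     {v. v \<in> range (Pa \<rho> a) \<and>
         (\<exists>N. \<forall>k\<in>{1..n}. ((\<lambda>x. y k x - scale (i ! (k - 1)) x) ^^ N) v = 0)}"

end

theory Submission
  imports Defs
begin


definition lin :: "('a::field \<Rightarrow> 'm::ab_group_add \<Rightarrow> 'm) \<Rightarrow> ('m \<Rightarrow> 'm) \<Rightarrow> bool" where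
  "lin sc f \<longleftrightarrow> (\<forall>u w. f (u + w) = f u + f w) \<and> (\<forall>c u. f (sc c u) = sc c (f u))"

definition subsp :: "('a::field \<Rightarrow> 'm::ab_group_add \<Rightarrow> 'm) \<Rightarrow> 'm set \<Rightarrow> bool" where
  "subsp sc R \<longleftrightarrow> 0 \<in> R \<and> (\<forall>u w. u \<in> R \<longrightarrow> w \<in> R \<longrightarrow> u + w \<in> R) \<and> (\<forall>c u. u \<in> R \<longrightarrow> sc c u \<in> R)"

lemma lin_add: "lin sc f \<Longrightarrow> f (u + w) = f u + f w" by (simp add: lin_def)
lemma lin_scale: "lin sc f \<Longrightarrow> f (sc c u) = sc c (f u)" by (simp add: lin_def)
lemma lin_0: "lin sc f \<Longrightarrow> f 0 = 0"
  by (metis add_cancel_right_right lin_add add_0)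
lemma lin_neg: "lin sc f \<Longrightarrow> f (- u) = - f u"
  by (metis add.right_inverse lin_0 lin_add neg_eq_iff_add_eq_0)
lemma lin_diff: "lin sc f \<Longrightarrow> f (u - w) = f u - f w"
  by (metis diff_conv_add_uminus lin_add lin_neg)

lemma lin_funpow: "lin sc f \<Longrightarrow> lin sc (f ^^ n)"
  by (induction n) (auto simp: lin_def)

lemma funpow_zero: "lin sc f \<Longrightarrow> (f ^^ n) 0 = 0"
  using lin_0 lin_funpow by blast

lemma funpow_mono0: "lin sc f \<Longrightarrow> (f ^^ p) v = 0 \<Longrightarrow> p \<le> m \<Longrightarrow> (f ^^ m) v = 0"
  by (metis funpow_add funpow_zero le_add_diff_inverse2 comp_apply)

lemma funpow_pres: "(\<forall>u\<in>R. H u \<in> R) \<Longrightarrow> u \<in> R \<Longrightarrow> (H ^^ n) u \<in> R"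
  by (induction n) auto

lemma intertwine:
  assumes "\<forall>u\<in>R. G (F u) = F (H u)" "\<forall>u\<in>R. H u \<in> R" "u \<in> R"
  shows "(G ^^ n) (F u) = F ((H ^^ n) u)"
  using assms(3)
proof (induction n)
  case (Suc n)
  then show ?case using assms funpow_pres[OF assms(2) Suc.prems, of n] by simp
qed simp

lemma lin_difff: "vector_space sc \<Longrightarrow> lin sc A \<Longrightarrow> lin sc B \<Longrightarrow> lin sc (\<lambda>u. A u - B u)"
  by (simp add: lin_def module.scale_right_diff_distrib module_iff_vector_space algebra_simps)

lemma lin_addf: "vector_space sc \<Longrightarrow> lin sc A \<Longrightarrow> lin sc B \<Longrightarrow> lin sc (\<lambda>u. A u + B u)"
  by (simp add: lin_def module.scale_right_distrib module_iff_vector_space algebra_simps)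

lemma lin_scalef: "vector_space sc \<Longrightarrow> lin sc (sc c)"
  by (simp add: lin_def module.scale_right_distrib module.scale_scale module_iff_vector_space mult.commute)

lemma lin_id: "lin sc (\<lambda>u. u)" by (simp add: lin_def)

lemma lin_comp: "lin sc A \<Longrightarrow> lin sc B \<Longrightarrow> lin sc (\<lambda>u. A (B u))" by (simp add: lin_def)

lemma nil_diff:
  assumes "vector_space sc" "lin sc A" "lin sc B" "\<And>u. A (B u) = B (A u)"
  shows "(A ^^ p) v = 0 \<Longrightarrow> (B ^^ q) v = 0 \<Longrightarrow> ((\<lambda>u. A u - B u) ^^ (p + q)) v = 0"
proof (induction "p + q" arbitrary: p q v)
  case 0
  then show ?case by simp
next
  case (Suc m)
  let ?D = "\<lambda>u. A u - B u"
  have linD: "lin sc (?D ^^ m)" using assms by (intro lin_funpow lin_difff)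
  show ?case
  proof (cases "p = 0 \<or> q = 0")
    case True
    then have "v = 0" using Suc.prems by auto
    have "lin sc ?D" using assms by (intro lin_difff)
    then have "(?D ^^ (p + q)) 0 = 0" by (rule funpow_zero)
    then show ?thesis using \<open>v = 0\<close> by simp
  next
    case False
    then obtain p' q' where p: "p = Suc p'" and q: "q = Suc q'" by (metis not0_implies_Suc)
    have cA: "(A ^^ n) (B u) = B ((A ^^ n) u)" for n u
      using intertwine[of UNIV A B A u n] assms(4) by auto
    have cB: "(B ^^ n) (A u) = A ((B ^^ n) u)" for n u
      using intertwine[of UNIV B A B u n] assms(4) by auto
    have e1: "(A ^^ p') (A v) = 0" using Suc.prems(1) p by (simp add: funpow_Suc_right del: funpow.simps)
    have e2: "(B ^^ q) (A v) = 0" using Suc.prems(2) cB lin_0[OF assms(2)] by simp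
    have e3: "(B ^^ q') (B v) = 0" using Suc.prems(2) q by (simp add: funpow_Suc_right del: funpow.simps)
    have e4: "(A ^^ p) (B v) = 0" using Suc.prems(1) cA lin_0[OF assms(3)] by simp
    have m1: "m = p' + q" and m2: "m = p + q'" using Suc.hyps(2) p q by auto
    have h1: "(?D ^^ (p' + q)) (A v) = 0"
      using Suc.hyps(1)[OF m1 e1 e2] .
    have h2: "(?D ^^ (p + q')) (B v) = 0"
      using Suc.hyps(1)[OF m2 e4 e3] .
    have calc: "(?D ^^ Suc m) v = (?D ^^ m) (A v) - (?D ^^ m) (B v)"
      using lin_diff[OF linD] by (simp add: funpow_Suc_right del: funpow.simps)
    have pq: "p + q = Suc m" using Suc.hyps(2) by simp
    show ?thesis unfolding pq calc using h1 h2 m1 m2 by simp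
  qed
qed

lemma subsp_diff: "vector_space sc \<Longrightarrow> subsp sc Q \<Longrightarrow> u \<in> Q \<Longrightarrow> w \<in> Q \<Longrightarrow> u - w \<in> Q"
proof -
  assume vs: "vector_space sc" and Q: "subsp sc Q" "u \<in> Q" "w \<in> Q"
  have "sc (-1) w = - w" using vs by (simp add: module.scale_minus_left module_iff_vector_space vector_space.vector_space_assms(4))
  moreover have "sc (-1) w \<in> Q" using Q by (simp add: subsp_def)
  ultimately show ?thesis using Q by (metis diff_conv_add_uminus subsp_def)
qed

lemma solve:
  assumes vs: "vector_space sc" and D: "lin sc D" and Q: "subsp sc Q" "\<forall>u\<in>Q. D u \<in> Q" and c: "c \<noteq> 0"
  shows "v \<in> Q \<Longrightarrow> (D ^^ M) v = 0 \<Longrightarrow> \<exists>w\<in>Q. sc c w + D w = v"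
proof (induction M arbitrary: v)
  case 0
  then have "v = 0" by simp
  then show ?case using Q lin_0[OF D] vs
    by (intro bexI[of _ 0]) (auto simp: subsp_def module.scale_zero_right module_iff_vector_space)
next
  case (Suc M)
  have "(D ^^ M) (D v) = 0" using Suc.prems(2) by (simp add: funpow_Suc_right del: funpow.simps)
  then obtain w1 where w1: "w1 \<in> Q" "sc c w1 + D w1 = D v" using Suc.IH Suc.prems(1) Q by blast
  define w where "w = sc (inverse c) (v - w1)"
  have wQ: "w \<in> Q" unfolding w_def using subsp_diff[OF vs Q(1) Suc.prems(1) w1(1)] Q(1) by (simp add: subsp_def)
  have m: "module sc" using vs by (simp add: module_iff_vector_space)
  have "sc c w = v - w1" unfolding w_def using c by (simp add: module.scale_scale[OF m] module.scale_one[OF m])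
  moreover have "D w = w1"
  proof -
    have "D w = sc (inverse c) (D v - D w1)" unfolding w_def by (simp add: lin_scale[OF D] lin_diff[OF D])
    also have "D v - D w1 = sc c w1" using w1(2) by (simp add: algebra_simps)
    finally show ?thesis using c by (simp add: module.scale_scale[OF m] module.scale_one[OF m])
  qed
  ultimately show ?case using wQ by (metis diff_add_cancel)
qed

lemma eqcase:
  assumes s: "lin sc s" and X: "lin sc X" and Z: "lin sc Z" and XZ: "\<And>u. X (Z u) = Z (X u)"
    and RX: "\<forall>u\<in>R. X u \<in> R" and RZ: "\<forall>u\<in>R. Z u \<in> R"
    and r1: "\<forall>u\<in>R. X (s u) = s (Z u) - u" and r2: "\<forall>u\<in>R. Z (s u) = s (X u) + u"
  shows "v \<in> R \<Longrightarrow> (X ^^ p) v = 0 \<Longrightarrow> (Z ^^ q) v = 0 \<Longrightarrow> (X ^^ (p + q)) (s v) = 0 \<and> (Z ^^ (p + q)) (s v) = 0"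
proof (induction "p + q" arbitrary: p q v)
  case 0
  then show ?case using lin_0[OF s] by simp
next
  case (Suc m)
  show ?case
  proof (cases "p = 0 \<or> q = 0")
    case True
    then have "v = 0" using Suc.prems by auto
    have "s 0 = 0" by (rule lin_0[OF s])
    then show ?thesis using \<open>v = 0\<close> funpow_zero[OF X, of "p+q"] funpow_zero[OF Z, of "p+q"] by simp
  next
    case False
    then obtain p' q' where p: "p = Suc p'" and q: "q = Suc q'" by (metis not0_implies_Suc)
    have m1: "m = p' + q" and m2: "m = p + q'" using Suc.hyps(2) p q by auto
    have cXZ: "(X ^^ n) (Z u) = Z ((X ^^ n) u)" for n u
      using intertwine[of UNIV X Z X u n] XZ by auto
    have cZX: "(Z ^^ n) (X u) = X ((Z ^^ n) u)" for n u
      using intertwine[of UNIV Z X Z u n] XZ by auto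
    have a1: "(X ^^ p) (Z v) = 0" using cXZ Suc.prems lin_0[OF Z] by simp
    have a2: "(Z ^^ q') (Z v) = 0" using Suc.prems(3) q by (simp add: funpow_Suc_right del: funpow.simps)
    have b1: "(X ^^ p') (X v) = 0" using Suc.prems(2) p by (simp add: funpow_Suc_right del: funpow.simps)
    have b2: "(Z ^^ q) (X v) = 0" using cZX Suc.prems lin_0[OF X] by simp
    have IH1: "(X ^^ m) (s (Z v)) = 0" using Suc.hyps(1)[OF m2 _ a1 a2] RZ Suc.prems(1) m2 by auto
    have IH2: "(Z ^^ m) (s (X v)) = 0" using Suc.hyps(1)[OF m1 _ b1 b2] RX Suc.prems(1) m1 by auto
    have v1: "(X ^^ m) v = 0" using funpow_mono0[OF X Suc.prems(2)] m2 by simp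
    have v2: "(Z ^^ m) v = 0" using funpow_mono0[OF Z Suc.prems(3)] m1 by simp
    have "(X ^^ Suc m) (s v) = (X ^^ m) (s (Z v) - v)"
      using r1 Suc.prems(1) by (simp add: funpow_Suc_right del: funpow.simps)
    also have "\<dots> = 0" using lin_diff[OF lin_funpow[OF X]] IH1 v1 by simp
    finally have c1: "(X ^^ Suc m) (s v) = 0" .
    have "(Z ^^ Suc m) (s v) = (Z ^^ m) (s (X v) + v)"
      using r2 Suc.prems(1) by (simp add: funpow_Suc_right del: funpow.simps)
    also have "\<dots> = 0" using lin_add[OF lin_funpow[OF Z]] IH2 v2 by simp
    finally have c2: "(Z ^^ Suc m) (s v) = 0" .
    show ?thesis using c1 c2 Suc.hyps(2) by metis
  qed
qed




lemma Seq_len: "a \<in> Seq r t \<Longrightarrow> length a = r + t" by (simp add: Seq_def)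

lemma finite_Seq: "finite (Seq r t)"
proof -
  have "Seq r t \<subseteq> {xs. set xs \<subseteq> UNIV \<and> length xs = r + t}" by (auto simp: Seq_def)
  moreover have "finite {xs. set xs \<subseteq> (UNIV::bool set) \<and> length xs = r + t}"
    by (rule finite_lists_length_eq) simp
  ultimately show ?thesis by (rule finite_subset)
qed

lemma is_diag_idd: "b \<in> Seq r t \<Longrightarrow> is_diag r t (idd b)"
  by (auto simp: is_diag_def idd_def dbot_def dtop_def dmat_def pts_def lab_def Seq_len)

lemma is_diag_sdiag:
  assumes "b \<in> Seq r t" "b ! (k - 1) = b ! k" "1 \<le> k" "k < r + t"
  shows "is_diag r t (sdiag k b)"
  using assms
  by (auto simp: is_diag_def sdiag_def cross_mat_def sw_def dbot_def dtop_def dmat_def pts_def lab_def Seq_len)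

lemma swapL_nth: "1 \<le> k \<Longrightarrow> k < length xs \<Longrightarrow> 1 \<le> j \<Longrightarrow>
  swapL k xs ! (j - 1) = (if j = k then xs ! k else if j = k + 1 then xs ! (k - 1) else xs ! (j - 1))"
  by (auto simp: swapL_def nth_list_update)

lemma swapL_same: "xs ! (k - 1) = xs ! k \<Longrightarrow> swapL k xs = xs"
  unfolding swapL_def by (metis list_update_id)




locale vbr =
  fixes r t :: nat and \<omega> :: "nat \<Rightarrow> complex"
    and scale :: "complex \<Rightarrow> 'm::ab_group_add \<Rightarrow> 'm"
    and \<rho> :: "diag \<Rightarrow> 'm \<Rightarrow> 'm" and y :: "nat \<Rightarrow> 'm \<Rightarrow> 'm"
  assumes M: "vbr_module r t \<omega> scale \<rho> y"
begin

lemma vs: "vector_space scale"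
  using M unfolding vbr_module_def Let_def apply (elim conjE) by blast

lemma rho_lin: "is_diag r t d \<Longrightarrow> lin scale (\<rho> d)"
proof -
  assume d: "is_diag r t d"
  have "\<forall>d. is_diag r t d \<longrightarrow> Vector_Spaces.linear scale scale (\<rho> d)"
    using M unfolding vbr_module_def Let_def by (elim conjE) assumption
  then have "Vector_Spaces.linear scale scale (\<rho> d)" using d by blast
  then show ?thesis by (simp add: Vector_Spaces.linear_iff lin_def)
qed

lemma comp: "is_diag r t d1 \<Longrightarrow> is_diag r t d2 \<Longrightarrow>
   \<rho> d1 (\<rho> d2 v) = (if dbot d1 = dtop d2 then scale ((\<omega> 0) ^ nloops d1 d2) (\<rho> (dcomp d1 d2) v) else 0)"
  using M unfolding vbr_module_def Let_def apply (elim conjE) by blast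

lemma Psum: "(\<Sum>a\<in>Seq r t. Pa \<rho> a v) = v"
  using M unfolding vbr_module_def Let_def apply (elim conjE) by blast

lemma ylin: "j \<in> {1..r+t} \<Longrightarrow> lin scale (y j)"
proof -
  assume d: "j \<in> {1..r+t}"
  have "\<forall>i\<in>{1..r+t}. Vector_Spaces.linear scale scale (y i)"
    using M unfolding vbr_module_def Let_def by (elim conjE) assumption
  then have "Vector_Spaces.linear scale scale (y j)" using d by blast
  then show ?thesis by (simp add: Vector_Spaces.linear_iff lin_def)
qed

lemma ycomm: "j \<in> {1..r+t} \<Longrightarrow> l \<in> {1..r+t} \<Longrightarrow> y j (y l v) = y l (y j v)"
  using M unfolding vbr_module_def Let_def commute_ops_def apply (elim conjE) by blast

lemma yP: "j \<in> {1..r+t} \<Longrightarrow> a \<in> Seq r t \<Longrightarrow> y j (Pa \<rho> a v) = Pa \<rho> a (y j v)"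
  using M unfolding vbr_module_def Let_def commute_ops_def apply (elim conjE) by blast

lemma yS: "j \<in> {1..r+t} \<Longrightarrow> k \<in> {1..<r+t} \<Longrightarrow> j \<noteq> k \<Longrightarrow> j \<noteq> k + 1 \<Longrightarrow>
   y j (Sop r t \<rho> k v) = Sop r t \<rho> k (y j v)"
  using M unfolding vbr_module_def Let_def commute_ops_def apply (elim conjE) by blast

lemma rel: "k \<in> {1..<r+t} \<Longrightarrow> a \<in> Seq r t \<Longrightarrow> a ! (k - 1) = a ! k \<Longrightarrow>
   Sop r t \<rho> k (y k (Pa \<rho> a v)) - y (k + 1) (Sop r t \<rho> k (Pa \<rho> a v)) = - Pa \<rho> a v \<and>
   Sop r t \<rho> k (y (k + 1) (Pa \<rho> a v)) - y k (Sop r t \<rho> k (Pa \<rho> a v)) = Pa \<rho> a v"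
  using M unfolding vbr_module_def Let_def apply (elim conjE) by blast

end



context vbr begin

lemma md: "module scale" using vs by (simp add: module_iff_vector_space)

definition T :: "complex list \<Rightarrow> nat \<Rightarrow> 'm \<Rightarrow> 'm" where
  "T il j = (\<lambda>x. y j x - scale (il ! (j - 1)) x)"

lemma T_lin: "j \<in> {1..r+t} \<Longrightarrow> lin scale (T il j)"
  unfolding T_def by (intro lin_difff vs ylin lin_scalef)

lemma T_comm: "j \<in> {1..r+t} \<Longrightarrow> l \<in> {1..r+t} \<Longrightarrow> T il j (T il' l u) = T il' l (T il j u)"
  unfolding T_def
  by (simp add: lin_diff[OF ylin] lin_scale[OF ylin] ycomm[of j l] module.scale_right_diff_distrib[OF md]
       module.scale_scale[OF md] mult.commute algebra_simps)

lemma yT: "j \<in> {1..r+t} \<Longrightarrow> l \<in> {1..r+t} \<Longrightarrow> y j (T il l u) = T il l (y j u)"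
  unfolding T_def by (simp add: lin_diff[OF ylin] lin_scale[OF ylin] ycomm[of j l])

lemma gs_iff: "v \<in> genspace (r+t) scale \<rho> y a il \<longleftrightarrow>
   v \<in> range (Pa \<rho> a) \<and> (\<exists>N. \<forall>j\<in>{1..r+t}. (T il j ^^ N) v = 0)"
  by (simp add: genspace_def T_def)

lemma P_lin: "a \<in> Seq r t \<Longrightarrow> lin scale (Pa \<rho> a)"
  unfolding Pa_def by (rule rho_lin[OF is_diag_idd])

lemma R_sub: "a \<in> Seq r t \<Longrightarrow> subsp scale (range (Pa \<rho> a))"
proof -
  assume a: "a \<in> Seq r t"
  note L = P_lin[OF a]
  show ?thesis unfolding subsp_def
  proof (intro conjI allI impI)
    show "0 \<in> range (Pa \<rho> a)" using lin_0[OF L] by (intro range_eqI[of _ _ 0]) simp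
    fix u w assume "u \<in> range (Pa \<rho> a)" "w \<in> range (Pa \<rho> a)"
    then obtain u' w' where "u = Pa \<rho> a u'" "w = Pa \<rho> a w'" by blast
    then show "u + w \<in> range (Pa \<rho> a)" using lin_add[OF L] by (intro range_eqI[of _ _ "u' + w'"]) simp
  next
    fix c u assume "u \<in> range (Pa \<rho> a)"
    then obtain u' where "u = Pa \<rho> a u'" by blast
    then show "scale c u \<in> range (Pa \<rho> a)" using lin_scale[OF L] by (intro range_eqI[of _ _ "scale c u'"]) simp
  qed
qed

lemma G_sub: "a \<in> Seq r t \<Longrightarrow> subsp scale (genspace (r+t) scale \<rho> y a il)"
proof -
  assume a: "a \<in> Seq r t"
  note R = R_sub[OF a]
  show ?thesis unfolding subsp_def gs_iff
  proof (intro conjI allI impI)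
    show "0 \<in> range (Pa \<rho> a)" using R by (simp add: subsp_def)
    show "\<exists>N. \<forall>j\<in>{1..r + t}. (T il j ^^ N) 0 = 0" by (intro exI[of _ 0]) simp
  next
    fix u w assume u: "u \<in> range (Pa \<rho> a) \<and> (\<exists>N. \<forall>j\<in>{1..r+t}. (T il j ^^ N) u = 0)"
      and w: "w \<in> range (Pa \<rho> a) \<and> (\<exists>N. \<forall>j\<in>{1..r+t}. (T il j ^^ N) w = 0)"
    then show "u + w \<in> range (Pa \<rho> a)" using R by (simp add: subsp_def)
    obtain N1 N2 where N1: "\<forall>j\<in>{1..r+t}. (T il j ^^ N1) u = 0" and N2: "\<forall>j\<in>{1..r+t}. (T il j ^^ N2) w = 0"
      using u w by blast
    show "\<exists>N. \<forall>j\<in>{1..r + t}. (T il j ^^ N) (u + w) = 0"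
    proof (intro exI[of _ "max N1 N2"] ballI)
      fix j assume j: "j \<in> {1..r+t}"
      have "(T il j ^^ max N1 N2) u = 0" using funpow_mono0[OF T_lin[OF j] _ max.cobounded1] N1 j by blast
      moreover have "(T il j ^^ max N1 N2) w = 0" using funpow_mono0[OF T_lin[OF j] _ max.cobounded2] N2 j by blast
      ultimately show "(T il j ^^ max N1 N2) (u + w) = 0" using lin_add[OF lin_funpow[OF T_lin[OF j]]] by simp
    qed
  next
    fix c u assume u: "u \<in> range (Pa \<rho> a) \<and> (\<exists>N. \<forall>j\<in>{1..r+t}. (T il j ^^ N) u = 0)"
    then show "scale c u \<in> range (Pa \<rho> a)" using R by (simp add: subsp_def)
    from u obtain N where N: "\<forall>j\<in>{1..r+t}. (T il j ^^ N) u = 0" by blast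
    show "\<exists>N. \<forall>j\<in>{1..r + t}. (T il j ^^ N) (scale c u) = 0"
    proof (intro exI[of _ N] ballI)
      fix j assume j: "j \<in> {1..r+t}"
      show "(T il j ^^ N) (scale c u) = 0"
        using lin_scale[OF lin_funpow[OF T_lin[OF j]]] N j module.scale_zero_right[OF md] by simp
    qed
  qed
qed

lemma yR: "j \<in> {1..r+t} \<Longrightarrow> a \<in> Seq r t \<Longrightarrow> u \<in> range (Pa \<rho> a) \<Longrightarrow> y j u \<in> range (Pa \<rho> a)"
proof -
  assume j: "j \<in> {1..r+t}" and a: "a \<in> Seq r t" and u: "u \<in> range (Pa \<rho> a)"
  then obtain u' where "u = Pa \<rho> a u'" by blast
  then show ?thesis using yP[OF j a] by (intro range_eqI[of _ _ "y j u'"]) simp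
qed

lemma yG: "j \<in> {1..r+t} \<Longrightarrow> a \<in> Seq r t \<Longrightarrow> u \<in> genspace (r+t) scale \<rho> y a il \<Longrightarrow>
    y j u \<in> genspace (r+t) scale \<rho> y a il"
proof -
  assume j: "j \<in> {1..r+t}" and a: "a \<in> Seq r t" and u: "u \<in> genspace (r+t) scale \<rho> y a il"
  then obtain N where uR: "u \<in> range (Pa \<rho> a)" and N: "\<forall>l\<in>{1..r+t}. (T il l ^^ N) u = 0"
    unfolding gs_iff by blast
  have "(T il l ^^ N) (y j u) = 0" if l: "l \<in> {1..r+t}" for l
  proof -
    have "(T il l ^^ N) (y j u) = y j ((T il l ^^ N) u)"
      using intertwine[of UNIV "T il l" "y j" "T il l" u N] yT[OF j l] by auto
    then show ?thesis using N l lin_0[OF ylin[OF j]] by simp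
  qed
  then show ?thesis unfolding gs_iff using yR[OF j a uR] by blast
qed

lemma TG: "j \<in> {1..r+t} \<Longrightarrow> a \<in> Seq r t \<Longrightarrow> u \<in> genspace (r+t) scale \<rho> y a il \<Longrightarrow>
    T il' j u \<in> genspace (r+t) scale \<rho> y a il"
  unfolding T_def using subsp_diff[OF vs G_sub yG] G_sub by (simp add: subsp_def)

lemma TR: "j \<in> {1..r+t} \<Longrightarrow> a \<in> Seq r t \<Longrightarrow> u \<in> range (Pa \<rho> a) \<Longrightarrow>
    T il' j u \<in> range (Pa \<rho> a)"
  unfolding T_def using subsp_diff[OF vs R_sub yR] R_sub by (simp add: subsp_def)

lemma Sop_R:
  assumes k: "k \<in> {1..<r+t}" and a: "a \<in> Seq r t" and u: "u \<in> range (Pa \<rho> a)"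
  shows "Sop r t \<rho> k u = (if a ! (k - 1) = a ! k then \<rho> (sdiag k a) u else 0)"
proof -
  obtain w where w: "u = \<rho> (idd a) w" using u unfolding Pa_def by blast
  let ?f = "\<lambda>b. if b ! (k - 1) = b ! k then \<rho> (sdiag k b) u else 0"
  have z: "?f b = 0" if b: "b \<in> Seq r t - {a}" for b
  proof (cases "b ! (k - 1) = b ! k")
    case True
    have "\<rho> (sdiag k b) (\<rho> (idd a) w) = 0"
      using comp[OF is_diag_sdiag[of b r t k] is_diag_idd[OF a]] b True k
      by (auto simp: sdiag_def idd_def dbot_def dtop_def)
    then show ?thesis using True w by simp
  qed simp
  have "Sop r t \<rho> k u = ?f a + sum ?f (Seq r t - {a})"
    unfolding Sop_def using sum.remove[OF finite_Seq a, of ?f] by simp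
  also have "sum ?f (Seq r t - {a}) = 0" using z by (intro sum.neutral) blast
  finally show ?thesis by simp
qed

lemma sR:
  assumes k: "k \<in> {1..<r+t}" and a: "a \<in> Seq r t" and e: "a ! (k - 1) = a ! k"
  shows "\<rho> (sdiag k a) u \<in> range (Pa \<rho> a)"
proof -
  let ?f = "\<lambda>b. Pa \<rho> b (\<rho> (sdiag k a) u)"
  have z: "?f b = 0" if b: "b \<in> Seq r t - {a}" for b
    using comp[OF is_diag_idd[of b r t] is_diag_sdiag[OF a e]] b k
    by (auto simp: Pa_def sdiag_def idd_def dbot_def dtop_def)
  have "\<rho> (sdiag k a) u = ?f a + sum ?f (Seq r t - {a})"
    using Psum[of "\<rho> (sdiag k a) u"] sum.remove[OF finite_Seq a, of ?f] by simp
  also have "sum ?f (Seq r t - {a}) = 0" using z by (intro sum.neutral) blast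
  finally show ?thesis by simp
qed

end



context vbr begin

lemma main:
  assumes k: "k \<in> {1..<r+t}" and a: "a \<in> Seq r t" and il: "length i = r + t"
    and v: "v \<in> genspace (r+t) scale \<rho> y a i"
  shows "Sop r t \<rho> k v \<in> {u + w |u w. u \<in> genspace (r+t) scale \<rho> y a i \<and>
                                         w \<in> genspace (r+t) scale \<rho> y a (swapL k i)}"
proof -
  let ?G = "genspace (r+t) scale \<rho> y a"
  let ?R = "range (Pa \<rho> a)"
  have vR: "v \<in> ?R" using v gs_iff by blast
  have k1: "k \<in> {1..r+t}" and k2: "k + 1 \<in> {1..r+t}" using k by auto
  note GS = G_sub[OF a] and RS = R_sub[OF a]
  show ?thesis
  proof (cases "a ! (k - 1) = a ! k")
    case False
    then have "Sop r t \<rho> k v = 0" using Sop_R[OF k a vR] by simp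
    moreover have "0 \<in> ?G i" "0 \<in> ?G (swapL k i)" using GS by (auto simp: subsp_def)
    ultimately show ?thesis by force
  next
    case True
    define s where "s = \<rho> (sdiag k a)"
    have slin: "lin scale s" unfolding s_def by (rule rho_lin[OF is_diag_sdiag]) (use a True k in auto)
    have SR: "u \<in> ?R \<Longrightarrow> Sop r t \<rho> k u = s u" for u using Sop_R[OF k a] True s_def by simp
    have sR: "s u \<in> ?R" for u unfolding s_def by (rule sR[OF k a True])
    have xl: "lin scale (y k)" and zl: "lin scale (y (k+1))" using ylin k1 k2 by auto
    have rx: "y k (s u) = s (y (k+1) u) - u" and rz: "y (k+1) (s u) = s (y k u) + u" if u: "u \<in> ?R" for u
    proof -
      obtain w where w: "u = Pa \<rho> a w" using u by blast
      note e0 = rel[OF k a True, of w, folded w]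
      have e1: "s (y k u) - y (k+1) (s u) = - u" and e2: "s (y (k+1) u) - y k (s u) = u"
        using e0 unfolding SR[OF u] SR[OF yR[OF k1 a u]] SR[OF yR[OF k2 a u]] by auto
      show "y k (s u) = s (y (k+1) u) - u" using e2 by (simp add: algebra_simps)
      show "y (k+1) (s u) = s (y k u) + u" using e1 by (simp add: algebra_simps)
    qed
    have sy: "y j (s u) = s (y j u)" if j: "j \<in> {1..r+t}" "j \<noteq> k" "j \<noteq> k + 1" and u: "u \<in> ?R" for j u
    proof -
      have "y j (Sop r t \<rho> k u) = Sop r t \<rho> k (y j u)" by (rule yS[OF j(1) k j(2) j(3)])
      then show ?thesis unfolding SR[OF u] SR[OF yR[OF j(1) a u]] .
    qed
    have sT: "T il j (s u) = s (T il j u)" if j: "j \<in> {1..r+t}" "j \<noteq> k" "j \<noteq> k + 1" and u: "u \<in> ?R" for il j u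
      unfolding T_def using sy[OF j u] lin_diff[OF slin] lin_scale[OF slin] by simp
    obtain N where N: "\<forall>j\<in>{1..r+t}. (T i j ^^ N) v = 0" using v gs_iff by blast
    show ?thesis
    proof (cases "i ! (k - 1) = i ! k")
      case True
      have sw: "swapL k i = i" by (rule swapL_same[OF True])
      have r1: "\<forall>u\<in>?R. T i k (s u) = s (T i (k+1) u) - u"
      proof
        fix u assume u: "u \<in> ?R"
        show "T i k (s u) = s (T i (k+1) u) - u"
          using True rx[OF u] by (simp add: T_def lin_diff[OF slin] lin_scale[OF slin] algebra_simps)
      qed
      have r2: "\<forall>u\<in>?R. T i (k+1) (s u) = s (T i k u) + u"
      proof
        fix u assume u: "u \<in> ?R"
        show "T i (k+1) (s u) = s (T i k u) + u"
          using True rz[OF u] by (simp add: T_def lin_diff[OF slin] lin_scale[OF slin] algebra_simps)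
      qed
      have TR1: "\<forall>u\<in>?R. T i k u \<in> ?R" using TR[OF k1 a] by blast
      have TR2: "\<forall>u\<in>?R. T i (k+1) u \<in> ?R" using TR[OF k2 a] by blast
      have Nk1: "(T i k ^^ N) v = 0" using N k1 by blast
      have Nk2: "(T i (k+1) ^^ N) v = 0" using N k2 by blast
      have ec: "(T i k ^^ (N + N)) (s v) = 0 \<and> (T i (k+1) ^^ (N + N)) (s v) = 0"
        by (rule eqcase[OF slin T_lin[OF k1] T_lin[OF k2] T_comm[OF k1 k2] TR1 TR2 r1 r2 vR Nk1 Nk2])
      have "(T i j ^^ (N + N)) (s v) = 0" if j: "j \<in> {1..r+t}" for j
      proof (cases "j = k \<or> j = k + 1")
        case True then show ?thesis using ec by auto
      next
        case False
        then have jk: "j \<noteq> k" "j \<noteq> k + 1" by auto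
        have it: "\<forall>u\<in>?R. T i j (s u) = s (T i j u)" using sT[OF j jk(1) jk(2)] by blast
        have TRj: "\<forall>u\<in>?R. T i j u \<in> ?R" using TR[OF j a] by blast
        have Nj: "(T i j ^^ N) v = 0" using N j by blast
        have "(T i j ^^ (N + N)) (s v) = s ((T i j ^^ (N + N)) v)" by (rule intertwine[OF it TRj vR])
        also have "(T i j ^^ (N + N)) v = 0" by (rule funpow_mono0[OF T_lin[OF j] Nj]) simp
        finally show ?thesis by (simp add: lin_0[OF slin])
      qed
      then have "s v \<in> ?G i" unfolding gs_iff using sR by blast
      moreover have "0 \<in> ?G (swapL k i)" using GS by (simp add: subsp_def)
      moreover have "Sop r t \<rho> k v = s v + 0" using SR[OF vR] by simp
      ultimately show ?thesis by blast
    next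
      case False
      define D where "D = (\<lambda>u. T i k u - T i (k+1) u)"
      have Dl: "lin scale D" unfolding D_def by (rule lin_difff[OF vs T_lin[OF k1] T_lin[OF k2]])
      have Nk1': "(T i k ^^ N) v = 0" using N k1 by blast
      have Nk2': "(T i (k+1) ^^ N) v = 0" using N k2 by blast
      have DN: "(D ^^ (N + N)) v = 0" unfolding D_def
        using nil_diff[OF vs T_lin[OF k1] T_lin[OF k2] T_comm[OF k1 k2] Nk1' Nk2'] .
      have DG: "\<forall>u\<in>?G i. D u \<in> ?G i"
      proof
        fix u assume u: "u \<in> ?G i"
        show "D u \<in> ?G i" unfolding D_def by (rule subsp_diff[OF vs GS TG[OF k1 a u] TG[OF k2 a u]])
      qed
      have c0: "i ! (k - 1) - i ! k \<noteq> 0" using False by simp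
      obtain w where wG: "w \<in> ?G i" and we: "scale (i ! (k - 1) - i ! k) w + D w = v"
        using solve[OF vs Dl GS DG c0 v DN] by blast
      have wR: "w \<in> ?R" using wG gs_iff by blast
      have xz: "y k w - y (k+1) w = v"
        using we unfolding D_def T_def by (simp add: module.scale_left_diff_distrib[OF md] algebra_simps)
      define \<phi> where "\<phi> = (\<lambda>u. s (y k u - y (k+1) u) + u)"
      have \<phi>l: "lin scale \<phi>" unfolding \<phi>_def
        by (rule lin_addf[OF vs lin_comp[OF slin lin_difff[OF vs xl zl]] lin_id])
      have Sv: "Sop r t \<rho> k v = (- w) + \<phi> w" using SR[OF vR] xz unfolding \<phi>_def by simp
      have "0 - w \<in> ?G i" by (rule subsp_diff[OF vs GS _ wG]) (use GS in \<open>simp add: subsp_def\<close>)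
      then have mw: "- w \<in> ?G i" by simp
      have \<phi>R: "\<phi> u \<in> ?R" if "u \<in> ?R" for u
        unfolding \<phi>_def using RS sR that by (simp add: subsp_def)
      have x\<phi>: "y k (\<phi> u) = \<phi> (y (k+1) u)" if u: "u \<in> ?R" for u
      proof -
        have "y k (\<phi> u) = y k (s (y k u)) - y k (s (y (k+1) u)) + y k u"
          unfolding \<phi>_def by (simp add: lin_add[OF xl] lin_diff[OF xl] lin_diff[OF slin])
        also have "\<dots> = (s (y (k+1) (y k u)) - y k u) - (s (y (k+1) (y (k+1) u)) - y (k+1) u) + y k u"
          using rx yR[OF k1 a u] yR[OF k2 a u] by simp
        also have "\<dots> = \<phi> (y (k+1) u)"
          unfolding \<phi>_def using ycomm[OF k1 k2, of u] by (simp add: lin_diff[OF slin])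
        finally show ?thesis .
      qed
      have z\<phi>: "y (k+1) (\<phi> u) = \<phi> (y k u)" if u: "u \<in> ?R" for u
      proof -
        have "y (k+1) (\<phi> u) = y (k+1) (s (y k u)) - y (k+1) (s (y (k+1) u)) + y (k+1) u"
          unfolding \<phi>_def by (simp only: lin_add[OF zl] lin_diff[OF zl] lin_diff[OF slin])
        also have "\<dots> = (s (y k (y k u)) + y k u) - (s (y k (y (k+1) u)) + y (k+1) u) + y (k+1) u"
          using rz yR[OF k1 a u] yR[OF k2 a u] by simp
        also have "\<dots> = \<phi> (y k u)"
          unfolding \<phi>_def using ycomm[OF k1 k2, of u] by (simp add: lin_diff[OF slin])
        finally show ?thesis .
      qed
      have j\<phi>: "y j (\<phi> u) = \<phi> (y j u)" if j: "j \<in> {1..r+t}" "j \<noteq> k" "j \<noteq> k + 1" and u: "u \<in> ?R" for j u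
      proof -
        have d: "y k u - y (k+1) u \<in> ?R" using subsp_diff[OF vs RS yR[OF k1 a u] yR[OF k2 a u]] .
        show ?thesis unfolding \<phi>_def
          using sy[OF j d] lin_add[OF ylin[OF j(1)]] lin_diff[OF ylin[OF j(1)]] ycomm[OF j(1) k1] ycomm[OF j(1) k2]
          by simp
      qed
      have gen: "(\<lambda>x. y j x - scale c x) (\<phi> u) = \<phi> ((\<lambda>x. y l x - scale c x) u)"
        if h: "y j (\<phi> u) = \<phi> (y l u)" for j l c u
        using h lin_diff[OF \<phi>l] lin_scale[OF \<phi>l] by simp
      have il': "length i = r + t" by (rule il)
      obtain N' where N': "\<forall>j\<in>{1..r+t}. (T i j ^^ N') w = 0" using wG gs_iff by blast
      have "(T (swapL k i) j ^^ N') (\<phi> w) = 0" if j: "j \<in> {1..r+t}" for j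
      proof -
        define l where "l = (if j = k then k + 1 else if j = k + 1 then k else j)"
        have l: "l \<in> {1..r+t}" unfolding l_def using j k1 k2 by auto
        have swn: "swapL k i ! (j - 1) = i ! (l - 1)"
          unfolding l_def using swapL_nth[of k i j] k il j by auto
        have it: "\<forall>u\<in>?R. T (swapL k i) j (\<phi> u) = \<phi> (T i l u)"
        proof
          fix u assume u: "u \<in> ?R"
          have "y j (\<phi> u) = \<phi> (y l u)" unfolding l_def using x\<phi>[OF u] z\<phi>[OF u] j\<phi>[OF j _ _ u] by auto
          then show "T (swapL k i) j (\<phi> u) = \<phi> (T i l u)" unfolding T_def swn using gen by blast
        qed
        have TRl: "\<forall>u\<in>?R. T i l u \<in> ?R" using TR[OF l a] by blast
        have "(T (swapL k i) j ^^ N') (\<phi> w) = \<phi> ((T i l ^^ N') w)" by (rule intertwine[OF it TRl wR])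
        then show ?thesis using N' l lin_0[OF \<phi>l] by simp
      qed
      then have "\<phi> w \<in> ?G (swapL k i)" unfolding gs_iff using \<phi>R[OF wR] by blast
      then show ?thesis unfolding Sv using mw by blast
    qed
  qed
qed

end

theorem lemma3p1:
  fixes r t :: nat and \<omega> :: "nat \<Rightarrow> complex"
    and scale :: "complex \<Rightarrow> 'm::ab_group_add \<Rightarrow> 'm"
    and \<rho> :: "diag \<Rightarrow> 'm \<Rightarrow> 'm" and y :: "nat \<Rightarrow> 'm \<Rightarrow> 'm"
  assumes "vbr_module r t \<omega> scale \<rho> y"
  shows "\<forall>k\<in>{1..<r + t}. \<forall>a\<in>Seq r t. \<forall>i::complex list. length i = r + t \<longrightarrow>
           (\<forall>v\<in>genspace (r + t) scale \<rho> y a i.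
              Sop r t \<rho> k v \<in> {u + w | u w. u \<in> genspace (r + t) scale \<rho> y a i \<and>
                                            w \<in> genspace (r + t) scale \<rho> y a (swapL k i)})"
proof -
  interpret vbr r t \<omega> scale \<rho> y by (rule vbr.intro) (rule assms)
  show ?thesis using main by blast
qed

end
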